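(* Let $P$ be a poset with $n$ elements that has a unique minimal element, and suppose this minimal element is covered by exactly one element. Then $P$ has exactly $2(n-1)!-(n-2)!$ quasi-tangled labelings.
   Context: A labeling is a bijection $L:P\to[n]$; it is a linear extension if $x<_P y$ implies $L(x)<L(y)$. Promotion $\partial$: for non-maximal $x$, the $L$-successor of $x$ is the element greater than $x$ with minimal label; the promotion chain is $v_1=L^{-1}(1)$, $v_{i+1}$ the $L$-successor of $v_i$, ending at the first maximal $v_m$; $\partial(L)(x)=L(x)-1$ off the chain, $\partial(L)(v_i)=L(v_{i+1})-1$ for $i<m$, $\partial(L)(v_m)=n$. The sorting time of $L$ is the least $k\ge0$ with $\partial^k(L)$ a linear extension; $L$ is quasi-tangled if its sorting time is $n-2$. *)

theory Defs
  imports Main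
begin

definition pless :: "('a \<times> 'a) set \<Rightarrow> 'a \<Rightarrow> 'a \<Rightarrow> bool" where
  "pless R x y \<longleftrightarrow> (x, y) \<in> R \<and> x \<noteq> y"

definition is_minimal :: "'a set \<Rightarrow> ('a \<times> 'a) set \<Rightarrow> 'a \<Rightarrow> bool" where
  "is_minimal P R x \<longleftrightarrow> x \<in> P \<and> \<not> (\<exists>y\<in>P. pless R y x)"

definition is_maximal :: "'a set \<Rightarrow> ('a \<times> 'a) set \<Rightarrow> 'a \<Rightarrow> bool" where
  "is_maximal P R x \<longleftrightarrow> x \<in> P \<and> \<not> (\<exists>y\<in>P. pless R x y)"

text \<open>y covers x\<close>
definition covers :: "'a set \<Rightarrow> ('a \<times> 'a) set \<Rightarrow> 'a \<Rightarrow> 'a \<Rightarrow> bool" where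
  "covers P R x y \<longleftrightarrow> x \<in> P \<and> y \<in> P \<and> pless R x y \<and> \<not> (\<exists>z\<in>P. pless R x z \<and> pless R z y)"

text \<open>Labelings: bijections P -> {1..n}, n = card P; normalised to 0 outside P so that
  they can be counted as functions.\<close>
definition labelings :: "'a set \<Rightarrow> ('a \<Rightarrow> nat) set" where
  "labelings P = {L. bij_betw L P {1..card P} \<and> (\<forall>x. x \<notin> P \<longrightarrow> L x = 0)}"

definition is_linear_extension :: "'a set \<Rightarrow> ('a \<times> 'a) set \<Rightarrow> ('a \<Rightarrow> nat) \<Rightarrow> bool" where
  "is_linear_extension P R L \<longleftrightarrow> (\<forall>x\<in>P. \<forall>y\<in>P. pless R x y \<longrightarrow> L x < L y)"

definition lsucc :: "'a set \<Rightarrow> ('a \<times> 'a) set \<Rightarrow> ('a \<Rightarrow> nat) \<Rightarrow> 'a \<Rightarrow> 'a" where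
  "lsucc P R L x = (THE y. y \<in> P \<and> pless R x y \<and> (\<forall>z\<in>P. pless R x z \<longrightarrow> L y \<le> L z))"

definition pchain :: "'a set \<Rightarrow> ('a \<times> 'a) set \<Rightarrow> ('a \<Rightarrow> nat) \<Rightarrow> nat \<Rightarrow> 'a" where
  "pchain P R L i = ((lsucc P R L) ^^ i) (inv_into P L 1)"

definition pchain_end :: "'a set \<Rightarrow> ('a \<times> 'a) set \<Rightarrow> ('a \<Rightarrow> nat) \<Rightarrow> nat" where
  "pchain_end P R L = (LEAST i. is_maximal P R (pchain P R L i))"

definition promotion :: "'a set \<Rightarrow> ('a \<times> 'a) set \<Rightarrow> ('a \<Rightarrow> nat) \<Rightarrow> ('a \<Rightarrow> nat)" where
  "promotion P R L x =
     (if x \<notin> P then 0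
      else if x = pchain P R L (pchain_end P R L) then card P
      else if (\<exists>i < pchain_end P R L. x = pchain P R L i) then L (lsucc P R L x) - 1
      else L x - 1)"

text \<open>L is quasi-tangled iff its sorting time is n - 2, i.e. promotion^(n-2)(L) is a
  linear extension and promotion^k(L) is not for any k < n - 2.\<close>
definition sorting_time :: "'a set \<Rightarrow> ('a \<times> 'a) set \<Rightarrow> ('a \<Rightarrow> nat) \<Rightarrow> nat" where
  "sorting_time P R L = (LEAST k. is_linear_extension P R ((promotion P R ^^ k) L))"

definition quasi_tangled :: "'a set \<Rightarrow> ('a \<times> 'a) set \<Rightarrow> ('a \<Rightarrow> nat) \<Rightarrow> bool" where
  "quasi_tangled P R L \<longleftrightarrow>
     is_linear_extension P R ((promotion P R ^^ (card P - 2)) L) \<and>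
     (\<forall>k < card P - 2. \<not> is_linear_extension P R ((promotion P R ^^ k) L))"

end

theory Submission
  imports Defs
begin
definition labs :: "'a set \<Rightarrow> nat set \<Rightarrow> ('a \<Rightarrow> nat) set" where
  "labs A B = {f. bij_betw f A B \<and> (\<forall>x. x \<notin> A \<longrightarrow> f x = 0)}"

lemma labs_finite:
  assumes "finite A" "finite B" shows "finite (labs A B)"
proof -
  have "labs A B \<subseteq> {f. \<forall>x. (x \<in> A \<longrightarrow> f x \<in> B) \<and> (x \<notin> A \<longrightarrow> f x = 0)}"
    unfolding labs_def by (auto dest: bij_betw_apply)
  thus ?thesis using finite_subset finite_set_of_finite_funs[OF assms] by blast
qed

lemma labs_fiberQ:
  assumes "x \<in> A" "a \<in> B"
  shows "card {f \<in> labs A B. f x = a \<and> Q f} = card {g \<in> labs (A - {x}) (B - {a}). Q (g(x:=a))}"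
proof -
  have img: "{f \<in> labs A B. f x = a} = (\<lambda>g. g(x:=a)) ` labs (A - {x}) (B - {a})"
  proof (rule set_eqI, rule iffI)
    fix f assume f: "f \<in> {f \<in> labs A B. f x = a}"
    have "f(x:=0) \<in> labs (A - {x}) (B - {a})"
      using f assms unfolding labs_def bij_betw_def inj_on_def
      by (auto simp: image_def)
    moreover have "f = (f(x:=0))(x:=a)" using f by auto
    ultimately show "f \<in> (\<lambda>g. g(x:=a)) ` labs (A - {x}) (B - {a})" by blast
  next
    fix f assume "f \<in> (\<lambda>g. g(x:=a)) ` labs (A - {x}) (B - {a})"
    then obtain g where g: "g \<in> labs (A - {x}) (B - {a})" and fg: "f = g(x:=a)" by blast
    have gb: "bij_betw g (A - {x}) (B - {a})" using g unfolding labs_def by auto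
    have "inj_on f A"
    proof (rule inj_onI)
      fix y z assume yz: "y \<in> A" "z \<in> A" "f y = f z"
      have ga: "g w \<noteq> a" if "w \<in> A - {x}" for w
        using gb that unfolding bij_betw_def by blast
      have gi: "inj_on g (A - {x})" using gb unfolding bij_betw_def by blast
      show "y = z"
      proof (cases "y = x")
        case True
        show ?thesis
        proof (rule ccontr)
          assume "y \<noteq> z"
          hence "f z = g z" "f y = a" using True unfolding fg by auto
          thus False using ga[of z] yz True \<open>y \<noteq> z\<close> by auto
        qed
      next
        case False
        show ?thesis
        proof (cases "z = x")
          case True
          hence "f y = g y" "f z = a" using False unfolding fg by auto
          thus ?thesis using ga[of y] yz False by auto
        next
          case False2: False
          hence "g y = g z" using False yz unfolding fg by auto
          thus ?thesis using gi False False2 yz inj_onD by fastforce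
        qed
      qed
    qed
    moreover have "f ` A = B"
    proof -
      have "f ` A = insert a (g ` (A - {x}))" using assms(1) unfolding fg by auto
      also have "\<dots> = B" using gb assms(2) unfolding bij_betw_def by auto
      finally show ?thesis .
    qed
    ultimately have "bij_betw f A B" unfolding bij_betw_def by auto
    moreover have "\<forall>y. y \<notin> A \<longrightarrow> f y = 0" using g assms unfolding fg labs_def by auto
    ultimately show "f \<in> {f \<in> labs A B. f x = a}" unfolding labs_def fg by auto
  qed
  have img2: "{f \<in> labs A B. f x = a \<and> Q f} = (\<lambda>g. g(x:=a)) ` {g \<in> labs (A - {x}) (B - {a}). Q (g(x:=a))}"
  proof -
    have "{f \<in> labs A B. f x = a \<and> Q f} = {f \<in> {f \<in> labs A B. f x = a}. Q f}" by auto
    also have "\<dots> = {f \<in> (\<lambda>g. g(x:=a)) ` labs (A - {x}) (B - {a}). Q f}" using img by simp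
    also have "\<dots> = (\<lambda>g. g(x:=a)) ` {g \<in> labs (A - {x}) (B - {a}). Q (g(x:=a))}" by auto
    finally show ?thesis .
  qed
  have "inj_on (\<lambda>g. g(x:=a)) (labs (A - {x}) (B - {a}))"
  proof (rule inj_onI)
    fix g h assume "g \<in> labs (A - {x}) (B - {a})" "h \<in> labs (A - {x}) (B - {a})" "g(x:=a) = h(x:=a)"
    hence g0: "g x = 0" "h x = 0" by (simp_all add: labs_def)
    show "g = h"
    proof
      fix y show "g y = h y"
      proof (cases "y = x")
        case True then show ?thesis using g0 by simp
      next
        case False
        have "(g(x:=a)) y = (h(x:=a)) y" using \<open>g(x:=a) = h(x:=a)\<close> by simp
        then show ?thesis using False by simp
      qed
    qed
  qed
  hence "inj_on (\<lambda>g. g(x:=a)) {g \<in> labs (A - {x}) (B - {a}). Q (g(x:=a))}"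
    by (rule inj_on_subset) auto
  hence "card ((\<lambda>g. g(x:=a)) ` {g \<in> labs (A - {x}) (B - {a}). Q (g(x:=a))}) = card {g \<in> labs (A - {x}) (B - {a}). Q (g(x:=a))}"
    by (rule card_image)
  thus ?thesis unfolding img2 .
qed

lemma labs_fiber:
  assumes "x \<in> A" "a \<in> B"
  shows "card {f \<in> labs A B. f x = a} = card (labs (A - {x}) (B - {a}))"
  using labs_fiberQ[OF assms, of "\<lambda>_. True"] by simp

lemma labs_card:
  "finite A \<Longrightarrow> finite B \<Longrightarrow> card A = card B \<Longrightarrow> card (labs A B) = fact (card A)"
proof (induction "card A" arbitrary: A B)
  case 0
  hence "A = {}" "B = {}" by auto
  hence "labs A B = {\<lambda>_. 0}" unfolding labs_def by (auto simp: bij_betw_def)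
  thus ?case using 0 by simp
next
  case (Suc k)
  have "A \<noteq> {}" using Suc.hyps(2) by auto
  then obtain x where x: "x \<in> A" by blast
  have un: "labs A B = (\<Union>a\<in>B. {f \<in> labs A B. f x = a})"
    using x unfolding labs_def by (auto dest: bij_betw_apply)
  have "card (labs A B) = (\<Sum>a\<in>B. card {f \<in> labs A B. f x = a})"
    apply (subst un)
    apply (rule card_UN_disjoint)
    using Suc.prems labs_finite[of A B] by (auto intro: finite_subset[OF _ labs_finite[of A B]])
  also have "\<dots> = (\<Sum>a\<in>B. fact k)"
  proof (rule sum.cong)
    fix a assume a: "a \<in> B"
    have "card {f \<in> labs A B. f x = a} = card (labs (A - {x}) (B - {a}))"
      using labs_fiber[OF x a] .
    also have "\<dots> = fact (card (A - {x}))"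
      using Suc.hyps(1)[of "A - {x}" "B - {a}"] Suc.prems Suc.hyps(2) x a by auto
    also have "\<dots> = fact k" using Suc.hyps(2) x Suc.prems by (metis card_Diff_singleton diff_Suc_1)
    finally show "card {f \<in> labs A B. f x = a} = fact k" .
  qed simp
  also have "\<dots> = fact (card A)"
  proof -
    have cb: "card B = Suc k" "card A = Suc k" using Suc.hyps(2) Suc.prems by auto
    show ?thesis by (simp add: cb)
  qed
  finally show ?case .
qed

definition stp :: "nat \<times> nat \<Rightarrow> nat \<times> nat" where
  "stp ac = (case ac of (a, c) \<Rightarrow>
     (if a = 1 then 1 else a - 1,
      if c = 1 then (if a = 2 then 2 else 1) else if a = 1 \<and> c = 2 then 2 else c - 1))"

lemma stp_lt: "1 \<le> a \<Longrightarrow> a < c \<Longrightarrow> (stp ^^ k) (a, c) = (max (a - k) 1, max (c - k) 2)"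
  by (induction k) (auto simp: stp_def max_def)

lemma stp_gt: "1 \<le> c \<Longrightarrow> c < a \<Longrightarrow>
   (stp ^^ k) (a, c) = (if a - 1 \<le> k then (1, 2) else (a - k, max (c - k) 1))"
  by (induction k) (auto simp: stp_def max_def)

lemma stp_qs:
  assumes "a \<in> {1..n}" "c \<in> {1..n}" "a \<noteq> c" "2 \<le> n"
  shows "((stp ^^ (n - 2)) (a, c) = (1, 2) \<and> (\<forall>k < n - 2. (stp ^^ k) (a, c) \<noteq> (1, 2)))
     \<longleftrightarrow> (c = n \<or> a = n - 1)"
proof (cases "a < c")
  case True
  have eq: "((stp ^^ k) (a, c) = (1, 2)) = (c \<le> k + 2)" for k
    using stp_lt[of a c k] True assms by (auto simp: max_def)
  show ?thesis
  proof (cases "n = 2")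
    case False
    then show ?thesis unfolding eq using assms True by (auto dest: spec[of _ "n - 3"])
  qed (use assms eq in auto)
next
  case False
  hence ca: "c < a" using assms by auto
  have eq: "((stp ^^ k) (a, c) = (1, 2)) = (a \<le> k + 1)" for k
    using stp_gt[of c a k] ca assms by auto
  show ?thesis
  proof (cases "n = 2")
    case False
    then show ?thesis unfolding eq using assms ca by (auto dest: spec[of _ "n - 3"])
  qed (use assms eq in auto)
qed

locale pos =
  fixes P :: "'a set" and R :: "('a \<times> 'a) set"
  assumes fin: "finite P" and po: "partial_order_on P R"
begin

lemma R_sub: "(x, y) \<in> R \<Longrightarrow> x \<in> P \<and> y \<in> P"
  using partial_order_onD(4)[OF po] by auto

lemma pl_P: "pless R x y \<Longrightarrow> x \<in> P \<and> y \<in> P"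
  using R_sub unfolding pless_def by auto

lemma pl_trans: "pless R x y \<Longrightarrow> pless R y z \<Longrightarrow> pless R x z"
  using partial_order_onD(2,3)[OF po] unfolding pless_def
  by (metis antisymD transD)

lemma pl_irrefl: "\<not> pless R x x"
  unfolding pless_def by auto

lemma pl_asym: "pless R x y \<Longrightarrow> \<not> pless R y x"
  using pl_trans pl_irrefl by blast

definition lab :: "('a \<Rightarrow> nat) \<Rightarrow> bool" where
  "lab L \<longleftrightarrow> L \<in> labelings P"

lemma lab_inj: "lab L \<Longrightarrow> inj_on L P"
  unfolding lab_def labelings_def bij_betw_def by auto

lemma lab_img: "lab L \<Longrightarrow> L ` P = {1..card P}"
  unfolding lab_def labelings_def bij_betw_def by auto

lemma lab_range: "lab L \<Longrightarrow> x \<in> P \<Longrightarrow> 1 \<le> L x \<and> L x \<le> card P"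
  using lab_img by fastforce

lemma lab_eq: "lab L \<Longrightarrow> x \<in> P \<Longrightarrow> y \<in> P \<Longrightarrow> L x = L y \<Longrightarrow> x = y"
  using lab_inj inj_onD by metis

lemma lab_ex: "lab L \<Longrightarrow> 1 \<le> k \<Longrightarrow> k \<le> card P \<Longrightarrow> \<exists>x\<in>P. L x = k"
  using lab_img by (metis atLeastAtMost_iff imageE)

lemma lab_inv: "lab L \<Longrightarrow> 1 \<le> k \<Longrightarrow> k \<le> card P \<Longrightarrow> inv_into P L k \<in> P \<and> L (inv_into P L k) = k"
  using lab_ex by (metis f_inv_into_f image_eqI inv_into_into)

lemma lsucc_eq:
  assumes "lab L" "z \<in> P" "pless R x z" "\<forall>z'\<in>P. pless R x z' \<longrightarrow> L z \<le> L z'"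
  shows "lsucc P R L x = z"
  unfolding lsucc_def
proof (rule the_equality)
  show "z \<in> P \<and> pless R x z \<and> (\<forall>z'\<in>P. pless R x z' \<longrightarrow> L z \<le> L z')" using assms by auto
next
  fix y assume "y \<in> P \<and> pless R x y \<and> (\<forall>z\<in>P. pless R x z \<longrightarrow> L y \<le> L z)"
  hence "L y = L z" using assms by force
  thus "y = z" using assms \<open>y \<in> P \<and> _\<close> lab_eq by blast
qed

lemma lsucc_prop:
  assumes "lab L" "x \<in> P" "\<not> is_maximal P R x"
  shows "lsucc P R L x \<in> P \<and> pless R x (lsucc P R L x) \<and>
         (\<forall>z\<in>P. pless R x z \<longrightarrow> L (lsucc P R L x) \<le> L z)"
proof -
  let ?U = "{z \<in> P. pless R x z}"
  have ne: "?U \<noteq> {}" using assms unfolding is_maximal_def by auto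
  have fU: "finite ?U" using fin by auto
  have "Min (L ` ?U) \<in> L ` ?U" using Min_in[of "L ` ?U"] fU ne by blast
  then obtain y where y0: "Min (L ` ?U) = L y" "y \<in> ?U" by (rule imageE)
  hence y: "y \<in> ?U" "L y = Min (L ` ?U)" by simp_all
  have "\<forall>z\<in>P. pless R x z \<longrightarrow> L y \<le> L z" using y fU by auto
  hence "lsucc P R L x = y" using lsucc_eq[OF assms(1)] y by auto
  thus ?thesis using y \<open>\<forall>z\<in>P. _\<close> by auto
qed

lemma v0: "lab L \<Longrightarrow> 1 \<le> card P \<Longrightarrow> pchain P R L 0 \<in> P \<and> L (pchain P R L 0) = 1"
  unfolding pchain_def using lab_inv[of L 1] by auto

lemma vSuc: "pchain P R L (Suc i) = lsucc P R L (pchain P R L i)"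
  unfolding pchain_def by simp

lemma v_in: "lab L \<Longrightarrow> 1 \<le> card P \<Longrightarrow> (\<forall>j<i. \<not> is_maximal P R (pchain P R L j)) \<Longrightarrow> pchain P R L i \<in> P"
proof (induction i)
  case 0 then show ?case using v0 by auto
next
  case (Suc i)
  then show ?case using lsucc_prop[of L "pchain P R L i"] vSuc by auto
qed

lemma v_step: "lab L \<Longrightarrow> 1 \<le> card P \<Longrightarrow> (\<forall>j\<le>i. \<not> is_maximal P R (pchain P R L j)) \<Longrightarrow>
   pless R (pchain P R L i) (pchain P R L (Suc i))"
  using v_in[of L i] lsucc_prop[of L "pchain P R L i"] vSuc by auto

lemma v_mono: "lab L \<Longrightarrow> 1 \<le> card P \<Longrightarrow> (\<forall>j<k. \<not> is_maximal P R (pchain P R L j)) \<Longrightarrow> i < k \<Longrightarrow>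
   pless R (pchain P R L i) (pchain P R L k)"
proof (induction k)
  case 0 then show ?case by auto
next
  case (Suc k)
  have st: "pless R (pchain P R L k) (pchain P R L (Suc k))"
    using v_step[of L k] Suc.prems by auto
  show ?case
  proof (cases "i = k")
    case True then show ?thesis using st by simp
  next
    case False
    hence "i < k" using Suc.prems(4) by auto
    moreover have "\<forall>j<k. \<not> is_maximal P R (pchain P R L j)" using Suc.prems(3) by auto
    ultimately have "pless R (pchain P R L i) (pchain P R L k)" using Suc.IH Suc.prems(1,2) by blast
    then show ?thesis using st pl_trans by blast
  qed
qed

lemma ex_max: "lab L \<Longrightarrow> 1 \<le> card P \<Longrightarrow> \<exists>i. is_maximal P R (pchain P R L i)"
proof (rule ccontr)
  assume L: "lab L" "1 \<le> card P" and nm: "\<nexists>i. is_maximal P R (pchain P R L i)"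
  have "inj (pchain P R L)"
  proof (rule injI)
    fix i j assume eq: "pchain P R L i = pchain P R L j"
    show "i = j"
    proof (rule ccontr)
      assume "i \<noteq> j"
      hence "i < j \<or> j < i" by auto
      thus False using v_mono[OF L, of j i] v_mono[OF L, of i j] nm eq pl_irrefl by metis
    qed
  qed
  moreover have "range (pchain P R L) \<subseteq> P" using v_in[OF L] nm by blast
  ultimately show False using fin finite_subset infinite_UNIV_nat finite_imageD by metis
qed

lemma e_max: "lab L \<Longrightarrow> 1 \<le> card P \<Longrightarrow> is_maximal P R (pchain P R L (pchain_end P R L))"
  unfolding pchain_end_def using ex_max LeastI_ex by metis

lemma e_before: "i < pchain_end P R L \<Longrightarrow> \<not> is_maximal P R (pchain P R L i)"
  unfolding pchain_end_def using not_less_Least by blast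

lemma ve_in: "lab L \<Longrightarrow> 1 \<le> card P \<Longrightarrow> i \<le> pchain_end P R L \<Longrightarrow> pchain P R L i \<in> P"
  using v_in[of L i] e_before by force

lemma ve_mono: "lab L \<Longrightarrow> 1 \<le> card P \<Longrightarrow> i < k \<Longrightarrow> k \<le> pchain_end P R L \<Longrightarrow>
   pless R (pchain P R L i) (pchain P R L k)"
  using v_mono[of L k i] e_before by force

lemma ve_inj: "lab L \<Longrightarrow> 1 \<le> card P \<Longrightarrow> i \<le> pchain_end P R L \<Longrightarrow> k \<le> pchain_end P R L \<Longrightarrow>
   pchain P R L i = pchain P R L k \<Longrightarrow> i = k"
  using ve_mono[of L i k] ve_mono[of L k i] pl_irrefl by (metis linorder_neqE_nat)

lemma prom_end: "lab L \<Longrightarrow> 1 \<le> card P \<Longrightarrow> promotion P R L (pchain P R L (pchain_end P R L)) = card P"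
  unfolding promotion_def using ve_in[of L "pchain_end P R L"] by auto

lemma prom_mid: "lab L \<Longrightarrow> 1 \<le> card P \<Longrightarrow> i < pchain_end P R L \<Longrightarrow>
  promotion P R L (pchain P R L i) = L (pchain P R L (Suc i)) - 1"
proof -
  assume a: "lab L" "1 \<le> card P" "i < pchain_end P R L"
  have "pchain P R L i \<noteq> pchain P R L (pchain_end P R L)" using ve_inj[OF a(1,2), of i "pchain_end P R L"] a by auto
  thus ?thesis unfolding promotion_def using ve_in[OF a(1,2), of i] a vSuc by auto
qed

lemma prom_off: "lab L \<Longrightarrow> x \<in> P \<Longrightarrow> (\<forall>i\<le>pchain_end P R L. x \<noteq> pchain P R L i) \<Longrightarrow>
  promotion P R L x = L x - 1"
proof -
  assume a: "lab L" "x \<in> P" "\<forall>i\<le>pchain_end P R L. x \<noteq> pchain P R L i"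
  hence c: "(\<exists>i<pchain_end P R L. x = pchain P R L i) = False" "(x = pchain P R L (pchain_end P R L)) = False"
    "(x \<notin> P) = False" by auto
  show ?thesis by (simp only: promotion_def c if_False)
qed

lemma prom_out: "x \<notin> P \<Longrightarrow> promotion P R L x = 0"
  unfolding promotion_def by auto

lemma prom_cases[consumes 3, case_names E M O]:
  assumes "lab L" "1 \<le> card P" "x \<in> P"
  obtains (E) "x = pchain P R L (pchain_end P R L)" "promotion P R L x = card P"
  | (M) i where "i < pchain_end P R L" "x = pchain P R L i" "promotion P R L x = L (pchain P R L (Suc i)) - 1"
  | (O) "\<forall>i\<le>pchain_end P R L. x \<noteq> pchain P R L i" "promotion P R L x = L x - 1"
proof (cases "\<exists>i\<le>pchain_end P R L. x = pchain P R L i")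
  case True
  then obtain i where i: "i \<le> pchain_end P R L" "x = pchain P R L i" by auto
  show ?thesis
  proof (cases "i = pchain_end P R L")
    case True then show ?thesis using E i prom_end assms by auto
  next
    case False then show ?thesis using M[of i] i prom_mid assms by auto
  qed
next
  case False then show ?thesis using O prom_off assms by auto
qed

lemma chain_not0: "lab L \<Longrightarrow> 1 \<le> card P \<Longrightarrow> 0 < i \<Longrightarrow> i \<le> pchain_end P R L \<Longrightarrow> 2 \<le> L (pchain P R L i)"
proof -
  assume a: "lab L" "1 \<le> card P" "0 < i" "i \<le> pchain_end P R L"
  have "pchain P R L i \<noteq> pchain P R L 0" using ve_inj[OF a(1,2), of i 0] a by auto
  hence "L (pchain P R L i) \<noteq> 1" using v0[OF a(1,2)] ve_in[OF a(1,2,4)] lab_eq[OF a(1)] by metis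
  thus ?thesis using lab_range[OF a(1) ve_in[OF a(1,2,4)]] by auto
qed

lemma off_not0: "lab L \<Longrightarrow> 1 \<le> card P \<Longrightarrow> x \<in> P \<Longrightarrow> (\<forall>i\<le>pchain_end P R L. x \<noteq> pchain P R L i) \<Longrightarrow> 2 \<le> L x"
proof -
  assume a: "lab L" "1 \<le> card P" "x \<in> P" "\<forall>i\<le>pchain_end P R L. x \<noteq> pchain P R L i"
  hence "L x \<noteq> 1" using v0[OF a(1,2)] lab_eq[OF a(1)] by (metis le0)
  thus ?thesis using lab_range[OF a(1,3)] by auto
qed

lemma prom_range: "lab L \<Longrightarrow> 1 \<le> card P \<Longrightarrow> x \<in> P \<Longrightarrow> 1 \<le> promotion P R L x \<and> promotion P R L x \<le> card P"
proof -
  assume a: "lab L" "1 \<le> card P" "x \<in> P"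
  show ?thesis
  using a proof (cases rule: prom_cases)
    case E then show ?thesis using a by auto
  next
    case (M i)
    then show ?thesis using chain_not0[OF a(1,2), of "Suc i"] lab_range[OF a(1) ve_in[OF a(1,2), of "Suc i"]] by auto
  next
    case O
    then show ?thesis using off_not0[OF a] lab_range[OF a(1,3)] by auto
  qed
qed

lemma prom_inj: "lab L \<Longrightarrow> 1 \<le> card P \<Longrightarrow> inj_on (promotion P R L) P"
proof (rule inj_onI)
  fix x y assume a: "lab L" "1 \<le> card P" and xy: "x \<in> P" "y \<in> P" "promotion P R L x = promotion P R L y"
  let ?e = "pchain_end P R L" and ?v = "pchain P R L"
  have midlt: "L (?v (Suc i)) - 1 < card P" if "i < ?e" for i
    using lab_range[OF a(1) ve_in[OF a(1,2), of "Suc i"]] that chain_not0[OF a(1,2), of "Suc i"] by auto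
  have offlt: "L z - 1 < card P" if "z \<in> P" for z using lab_range[OF a(1) that] by auto
  show "x = y"
  using a xy(1) proof (cases rule: prom_cases)
    case E
    show ?thesis using a xy(2)
    proof (cases rule: prom_cases)
      case E2: E then show ?thesis using E by simp
    next
      case (M j) then show ?thesis using E xy(3) midlt[of j] by simp
    next
      case O then show ?thesis using E xy offlt[of y] by simp
    qed
  next
    case M1: (M i)
    show ?thesis
    using a xy(2) proof (cases rule: prom_cases)
      case E then show ?thesis using M1 xy midlt[of i] by simp
    next
      case M2: (M j)
      have "L (?v (Suc i)) - 1 = L (?v (Suc j)) - 1"
        using M1 M2 xy by simp
      hence "L (?v (Suc i)) = L (?v (Suc j))"
        using chain_not0[OF a(1,2), of "Suc i"] chain_not0[OF a(1,2), of "Suc j"] M1 M2 by simp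
      hence "?v (Suc i) = ?v (Suc j)"
        using lab_eq[OF a(1)] ve_in[OF a(1,2), of "Suc i"] ve_in[OF a(1,2), of "Suc j"] M1 M2 by simp
      hence "i = j" using ve_inj[OF a(1,2), of "Suc i" "Suc j"] M1 M2 by simp
      then show ?thesis using M1 M2 by simp
    next
      case O
      have "L (?v (Suc i)) - 1 = L y - 1"
        using M1 O xy by simp
      hence "L (?v (Suc i)) = L y"
        using chain_not0[OF a(1,2), of "Suc i"] off_not0[OF a xy(2)] O M1 by simp
      hence "?v (Suc i) = y"
        using lab_eq[OF a(1)] ve_in[OF a(1,2), of "Suc i"] M1 xy by simp
      then show ?thesis using O M1 by (metis Suc_leI)
    qed
  next
    case O
    show ?thesis
    using a xy(2) proof (cases rule: prom_cases)
      case E then show ?thesis using O xy offlt by auto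
    next
      case (M j)
      have "L (?v (Suc j)) = L x"
        using M O xy chain_not0[OF a(1,2), of "Suc j"] off_not0[OF a xy(1)] by auto
      hence "?v (Suc j) = x"
        using lab_eq[OF a(1)] ve_in[OF a(1,2), of "Suc j"] M xy by auto
      then show ?thesis using O M by (metis Suc_leI)
    next
      case O2: O
      then show ?thesis using O xy off_not0[OF a xy(1)] off_not0[OF a xy(2)] lab_eq[OF a(1)] by auto
    qed
  qed
qed

lemma prom_lab: "lab L \<Longrightarrow> 1 \<le> card P \<Longrightarrow> lab (promotion P R L)"
proof -
  assume a: "lab L" "1 \<le> card P"
  have sub: "promotion P R L ` P \<subseteq> {1..card P}" using prom_range[OF a] by auto
  have "card (promotion P R L ` P) = card {1..card P}" using prom_inj[OF a] card_image by fastforce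
  hence "promotion P R L ` P = {1..card P}" using sub card_subset_eq by (metis finite_atLeastAtMost)
  thus ?thesis unfolding lab_def labelings_def bij_betw_def using prom_inj[OF a] prom_out by auto
qed

end

context pos begin

definition sa :: "nat \<Rightarrow> ('a \<Rightarrow> nat) \<Rightarrow> bool" where
  "sa K L \<longleftrightarrow> (\<forall>x\<in>P. \<forall>y\<in>P. pless R x y \<longrightarrow> K < L x \<longrightarrow> L x < L y)"

lemma sa_ge:
  assumes a: "lab L" "1 \<le> card P" and s: "sa K L" and y: "y \<in> P" "K < L y"
  shows "L y - 1 \<le> promotion P R L y"
  using a y(1)
proof (cases rule: prom_cases)
  case E then show ?thesis using lab_range[OF a(1) y(1)] by linarith
next
  case (M i)
  have "pless R (pchain P R L i) (pchain P R L (Suc i))" using ve_mono[OF a, of i "Suc i"] M by simp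
  moreover have "pchain P R L (Suc i) \<in> P" using ve_in[OF a, of "Suc i"] M by simp
  ultimately have "L y < L (pchain P R L (Suc i))" using s y M unfolding sa_def by blast
  then show ?thesis using M by simp
next
  case O then show ?thesis by simp
qed

lemma sa_step:
  assumes a: "lab L" "1 \<le> card P" and s: "sa K L"
  shows "sa (K - 1) (promotion P R L)"
  unfolding sa_def
proof (intro ballI impI)
  fix x y assume xy: "x \<in> P" "y \<in> P" "pless R x y" and k: "K - 1 < promotion P R L x"
  have ne: "promotion P R L x \<noteq> promotion P R L y"
    using prom_inj[OF a] xy pl_irrefl inj_onD by metis
  have "promotion P R L x \<le> promotion P R L y"
    using a xy(1)
  proof (cases rule: prom_cases)
    case E
    then have "is_maximal P R x" using e_max[OF a] by simp
    then show ?thesis using xy unfolding is_maximal_def by blast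
  next
    case (M i)
    let ?w = "pchain P R L (Suc i)"
    have w: "?w = lsucc P R L x" using M vSuc by simp
    have "L ?w \<le> L y" using lsucc_prop[OF a(1) xy(1)] e_before[OF M(1)] M(2) w xy by auto
    moreover have "1 \<le> L ?w" using lab_range[OF a(1) ve_in[OF a, of "Suc i"]] M by simp
    moreover have "K < L ?w" using k M \<open>1 \<le> L ?w\<close> by simp
    ultimately have "L y - 1 \<le> promotion P R L y" using sa_ge[OF a s xy(2)] by simp
    then show ?thesis using M \<open>L ?w \<le> L y\<close> by simp
  next
    case O
    have "1 \<le> L x" using lab_range[OF a(1) xy(1)] by simp
    hence "K < L x" using k O by simp
    hence "L x < L y" using s xy unfolding sa_def by blast
    hence "L y - 1 \<le> promotion P R L y" using sa_ge[OF a s xy(2)] \<open>K < L x\<close> by simp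
    then show ?thesis using O \<open>L x < L y\<close> by simp
  qed
  then show "promotion P R L x < promotion P R L y" using ne by simp
qed

lemma sa_init: "lab L \<Longrightarrow> sa (card P) L"
  unfolding sa_def using lab_range by fastforce

lemma sa_mono: "sa K L \<Longrightarrow> K \<le> K' \<Longrightarrow> sa K' L"
  unfolding sa_def by fastforce

lemma iter:
  assumes "lab L" "1 \<le> card P"
  shows "lab ((promotion P R ^^ k) L) \<and> sa (card P - k) ((promotion P R ^^ k) L)"
proof (induction k)
  case 0 then show ?case using assms sa_init by simp
next
  case (Suc k)
  have "sa (card P - k - 1) (promotion P R ((promotion P R ^^ k) L))"
    using sa_step[OF _ assms(2)] Suc by blast
  then show ?case using prom_lab[OF _ assms(2)] Suc by simp
qed

end

locale pos2 = pos +
  fixes m b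
  assumes m_in: "m \<in> P" and b_in: "b \<in> P" and mb: "m \<noteq> b"
    and m_below: "\<forall>x\<in>P. x \<noteq> m \<longrightarrow> pless R m x"
    and b_below: "\<forall>x\<in>P. x \<noteq> m \<and> x \<noteq> b \<longrightarrow> pless R b x"
begin

lemma n2: "2 \<le> card P"
proof -
  have "card {m, b} \<le> card P" using m_in b_in fin by (intro card_mono) auto
  thus ?thesis using mb by simp
qed

lemma n1: "1 \<le> card P" using n2 by simp

lemma b_max_card: "is_maximal P R b \<Longrightarrow> card P = 2"
proof -
  assume bm: "is_maximal P R b"
  have "P = {m, b}"
  proof
    show "P \<subseteq> {m, b}" using bm b_below unfolding is_maximal_def by blast
  qed (use m_in b_in in auto)
  thus ?thesis using mb by simp
qed

lemma b_nmax_card: "\<not> is_maximal P R b \<Longrightarrow> 3 \<le> card P"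
proof -
  assume "\<not> is_maximal P R b"
  then obtain y where y: "y \<in> P" "pless R b y" using b_in unfolding is_maximal_def by blast
  have "y \<noteq> m"
  proof
    assume "y = m"
    hence "pless R b m" using y by simp
    moreover have "pless R m b" using m_below mb b_in by auto
    ultimately show False using pl_asym by blast
  qed
  have "y \<noteq> b" using y pl_irrefl by blast
  have "card {m, b, y} \<le> card P" using m_in b_in y fin by (intro card_mono) auto
  thus ?thesis using mb \<open>y \<noteq> m\<close> \<open>y \<noteq> b\<close> by simp
qed

lemma mb_pl: "pless R m b" using m_below mb b_in by auto

lemma m_nmax: "\<not> is_maximal P R m"
  using mb_pl b_in unfolding is_maximal_def by blast

lemma lab_ne: "lab L \<Longrightarrow> x \<in> P \<Longrightarrow> y \<in> P \<Longrightarrow> x \<noteq> y \<Longrightarrow> L x \<noteq> L y"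
  using lab_eq by blast

lemma v0_lab: "lab L \<Longrightarrow> x \<in> P \<Longrightarrow> L x = 1 \<Longrightarrow> pchain P R L 0 = x"
  using v0[OF _ n1] lab_eq by metis

lemma e_pos: "lab L \<Longrightarrow> \<not> is_maximal P R (pchain P R L 0) \<Longrightarrow> 0 < pchain_end P R L"
  using e_max[OF _ n1] by (metis gr0I)

lemma e_zero: "is_maximal P R (pchain P R L 0) \<Longrightarrow> pchain_end P R L = 0"
  unfolding pchain_end_def by (rule Least_eq_0)

lemma e_le: "is_maximal P R (pchain P R L i) \<Longrightarrow> pchain_end P R L \<le> i"
  unfolding pchain_end_def by (rule Least_le)

lemma lsucc_lab:
  assumes L: "lab L" and x: "x \<in> P" and k: "1 \<le> k" "k \<le> card P"
    and up: "pless R x (inv_into P L k)"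
    and low: "\<forall>z\<in>P. pless R x z \<longrightarrow> k \<le> L z"
  shows "lsucc P R L x = inv_into P L k \<and> L (lsucc P R L x) = k"
proof -
  have i: "inv_into P L k \<in> P" "L (inv_into P L k) = k" using lab_inv[OF L k] by auto
  have "lsucc P R L x = inv_into P L k" using lsucc_eq[OF L i(1) up] low i by simp
  thus ?thesis using i by simp
qed

lemma chain_after:
  assumes L: "lab L" and j: "j \<le> pchain_end P R L" and pb: "pless R b (pchain P R L j)"
    and i: "j \<le> i" "i \<le> pchain_end P R L"
  shows "pchain P R L i \<noteq> b"
proof (cases "i = j")
  case True then show ?thesis using pb pl_irrefl by metis
next
  case False
  hence "pless R (pchain P R L j) (pchain P R L i)" using ve_mono[OF L n1, of j i] i by simp
  hence "pless R b (pchain P R L i)" using pb pl_trans by blast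
  then show ?thesis using pl_irrefl by metis
qed

lemma m_first:
  assumes L: "lab L" and lm: "L m = 1"
  shows "pchain P R L 0 = m" "0 < pchain_end P R L"
    "pchain P R L 1 = inv_into P L 2" "L (pchain P R L 1) = 2"
proof -
  show v: "pchain P R L 0 = m" using v0_lab[OF L m_in lm] .
  show "0 < pchain_end P R L" using e_pos[OF L] v m_nmax by simp
  have i2: "inv_into P L 2 \<in> P" "L (inv_into P L 2) = 2" using lab_inv[OF L, of 2] n2 by auto
  have "inv_into P L 2 \<noteq> m" using i2 lm by auto
  hence up: "pless R m (inv_into P L 2)" using m_below i2 by blast
  have low: "\<forall>z\<in>P. pless R m z \<longrightarrow> 2 \<le> L z"
  proof (intro ballI impI)
    fix z assume "z \<in> P" "pless R m z"
    hence "z \<noteq> m" using pl_irrefl by metis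
    hence "L z \<noteq> 1" using lab_ne[OF L \<open>z \<in> P\<close> m_in] lm by simp
    thus "2 \<le> L z" using lab_range[OF L \<open>z \<in> P\<close>] by simp
  qed
  have "pchain P R L 1 = lsucc P R L m" using vSuc[of L 0] v by simp
  thus "pchain P R L 1 = inv_into P L 2" "L (pchain P R L 1) = 2"
    using lsucc_lab[OF L m_in _ _ up low] n2 by auto
qed

lemma prom_m: "lab L \<Longrightarrow> promotion P R L m = (if L m = 1 then 1 else L m - 1)"
proof -
  assume L: "lab L"
  show ?thesis
  proof (cases "L m = 1")
    case True
    note mf = m_first[OF L True]
    have "promotion P R L (pchain P R L 0) = L (pchain P R L 1) - 1"
      using prom_mid[OF L n1 mf(2)] by simp
    then show ?thesis using mf True by simp
  next
    case False
    have off: "\<forall>i\<le>pchain_end P R L. m \<noteq> pchain P R L i"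
    proof (intro allI impI)
      fix i assume i: "i \<le> pchain_end P R L"
      show "m \<noteq> pchain P R L i"
      proof (cases "i = 0")
        case True then show ?thesis using v0[OF L n1] False by auto
      next
        case False
        hence pl: "pless R (pchain P R L 0) (pchain P R L i)" using ve_mono[OF L n1, of 0 i] i by simp
        have "pchain P R L 0 \<noteq> m" using v0[OF L n1] \<open>L m \<noteq> 1\<close> by auto
        hence "pless R m (pchain P R L 0)" using m_below v0[OF L n1] by blast
        then show ?thesis using pl pl_asym by blast
      qed
    qed
    show ?thesis using prom_off[OF L m_in off] False by simp
  qed
qed

lemma b_pl_other: "z \<in> P \<Longrightarrow> z \<noteq> m \<Longrightarrow> z \<noteq> b \<Longrightarrow> pless R b z"
  using b_below by blast

lemma other_of_b: "pless R b z \<Longrightarrow> z \<in> P \<and> z \<noteq> m \<and> z \<noteq> b"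
  using pl_P pl_irrefl pl_asym mb_pl by metis

lemma prom_b: "lab L \<Longrightarrow> promotion P R L b =
   (if L b = 1 then (if L m = 2 then 2 else 1) else if L m = 1 \<and> L b = 2 then 2 else L b - 1)"
proof -
  assume L: "lab L"
  have lmb: "L m \<noteq> L b" using lab_ne[OF L m_in b_in mb] .
  have rm: "1 \<le> L m" "L m \<le> card P" using lab_range[OF L m_in] by auto
  have rb: "1 \<le> L b" "L b \<le> card P" using lab_range[OF L b_in] by auto
  show ?thesis
  proof (cases "L b = 1")
    case True
    have v: "pchain P R L 0 = b" using v0_lab[OF L b_in True] .
    show ?thesis
    proof (cases "is_maximal P R b")
      case True
      have "pchain_end P R L = 0" using e_zero v True by simp
      hence "promotion P R L b = card P" using prom_end[OF L n1] v by simp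
      moreover have "card P = 2" using b_max_card True by simp
      ultimately show ?thesis using \<open>L b = 1\<close> rm lmb by auto
    next
      case False
      have e: "0 < pchain_end P R L" using e_pos[OF L] v False by simp
      have pm: "promotion P R L b = L (pchain P R L 1) - 1"
        using prom_mid[OF L n1 e] v by simp
      have v1: "pchain P R L 1 = lsucc P R L b" using vSuc[of L 0] v by simp
      have n3: "3 \<le> card P" using b_nmax_card False .
      show ?thesis
      proof (cases "L m = 2")
        case True
        have i: "inv_into P L 3 \<in> P" "L (inv_into P L 3) = 3" using lab_inv[OF L, of 3] n3 by auto
        have "inv_into P L 3 \<noteq> m" "inv_into P L 3 \<noteq> b" using i True \<open>L b = 1\<close> by auto
        hence up: "pless R b (inv_into P L 3)" using b_pl_other i by blast
        have low: "\<forall>z\<in>P. pless R b z \<longrightarrow> 3 \<le> L z"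
        proof (intro ballI impI)
          fix z assume "z \<in> P" "pless R b z"
          hence "z \<noteq> m" "z \<noteq> b" using other_of_b by auto
          hence "L z \<noteq> 1" "L z \<noteq> 2" using lab_ne[OF L \<open>z \<in> P\<close> m_in] lab_ne[OF L \<open>z \<in> P\<close> b_in]
            True \<open>L b = 1\<close> by auto
          thus "3 \<le> L z" using lab_range[OF L \<open>z \<in> P\<close>] by simp
        qed
        have "L (lsucc P R L b) = 3" using lsucc_lab[OF L b_in _ _ up low] n3 by auto
        then show ?thesis using pm v1 True \<open>L b = 1\<close> by simp
      next
        case False
        have i: "inv_into P L 2 \<in> P" "L (inv_into P L 2) = 2" using lab_inv[OF L, of 2] n3 by auto
        have "inv_into P L 2 \<noteq> m" "inv_into P L 2 \<noteq> b" using i False \<open>L b = 1\<close> by auto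
        hence up: "pless R b (inv_into P L 2)" using b_pl_other i by blast
        have low: "\<forall>z\<in>P. pless R b z \<longrightarrow> 2 \<le> L z"
        proof (intro ballI impI)
          fix z assume "z \<in> P" "pless R b z"
          hence "z \<noteq> b" using other_of_b by auto
          hence "L z \<noteq> 1" using lab_ne[OF L \<open>z \<in> P\<close> b_in] \<open>L b = 1\<close> by auto
          thus "2 \<le> L z" using lab_range[OF L \<open>z \<in> P\<close>] by simp
        qed
        have "L (lsucc P R L b) = 2" using lsucc_lab[OF L b_in _ _ up low] n3 by auto
        then show ?thesis using pm v1 False \<open>L b = 1\<close> by simp
      qed
    qed
  next
    case lb1: False
    show ?thesis
    proof (cases "L m = 1")
      case lm1: True
      note mf = m_first[OF L lm1]
      show ?thesis
      proof (cases "L b = 2")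
        case True
        have "pchain P R L 1 \<in> P" using ve_in[OF L n1, of 1] mf(2) by simp
        hence v1: "pchain P R L 1 = b"
          using mf(4) lab_eq[OF L _ b_in] True by simp
        show ?thesis
        proof (cases "is_maximal P R b")
          case True
          have "pchain_end P R L = 1" using e_le[of L 1] v1 True mf(2) by simp
          hence "promotion P R L b = card P" using prom_end[OF L n1] v1 by simp
          moreover have "card P = 2" using b_max_card True by simp
          ultimately show ?thesis using lb1 lm1 \<open>L b = 2\<close> by simp
        next
          case False
          have "1 < pchain_end P R L" using e_max[OF L n1] mf(2) v1 False
            by (metis One_nat_def Suc_lessI)
          hence pm: "promotion P R L b = L (pchain P R L 2) - 1"
            using prom_mid[OF L n1, of 1] v1 by (simp add: numeral_2_eq_2)
          have v2: "pchain P R L 2 = lsucc P R L b" using vSuc[of L 1] v1 by (simp add: numeral_2_eq_2)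
          have n3: "3 \<le> card P" using b_nmax_card False .
          have i: "inv_into P L 3 \<in> P" "L (inv_into P L 3) = 3" using lab_inv[OF L, of 3] n3 by auto
          have "inv_into P L 3 \<noteq> m" "inv_into P L 3 \<noteq> b" using i lm1 \<open>L b = 2\<close> by auto
          hence up: "pless R b (inv_into P L 3)" using b_pl_other i by blast
          have low: "\<forall>z\<in>P. pless R b z \<longrightarrow> 3 \<le> L z"
          proof (intro ballI impI)
            fix z assume "z \<in> P" "pless R b z"
            hence "z \<noteq> m" "z \<noteq> b" using other_of_b by auto
            hence "L z \<noteq> 1" "L z \<noteq> 2" using lab_ne[OF L \<open>z \<in> P\<close> m_in] lab_ne[OF L \<open>z \<in> P\<close> b_in]
              lm1 \<open>L b = 2\<close> by auto
            thus "3 \<le> L z" using lab_range[OF L \<open>z \<in> P\<close>] by simp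
          qed
          have "L (lsucc P R L b) = 3" using lsucc_lab[OF L b_in _ _ up low] n3 by auto
          then show ?thesis using pm v2 lm1 \<open>L b = 2\<close> by simp
        qed
      next
        case False
        have w: "pchain P R L 1 \<in> P" using ve_in[OF L n1, of 1] mf(2) by simp
        have "pchain P R L 1 \<noteq> m" "pchain P R L 1 \<noteq> b" using mf(4) lm1 False by auto
        hence pb: "pless R b (pchain P R L 1)" using b_pl_other w by blast
        have off: "\<forall>i\<le>pchain_end P R L. b \<noteq> pchain P R L i"
        proof (intro allI impI)
          fix i assume i: "i \<le> pchain_end P R L"
          show "b \<noteq> pchain P R L i"
          proof (cases "i = 0")
            case True then show ?thesis using mf(1) mb by simp
          next
            case False
            then show ?thesis using chain_after[OF L _ pb, of i] mf(2) i by simp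
          qed
        qed
        show ?thesis using prom_off[OF L b_in off] lb1 False by simp
      qed
    next
      case lm1: False
      have w: "pchain P R L 0 \<in> P" "L (pchain P R L 0) = 1" using v0[OF L n1] by auto
      have "pchain P R L 0 \<noteq> m" "pchain P R L 0 \<noteq> b" using w lm1 lb1 by auto
      hence pb: "pless R b (pchain P R L 0)" using b_pl_other w by blast
      have off: "\<forall>i\<le>pchain_end P R L. b \<noteq> pchain P R L i"
        using chain_after[OF L _ pb] by auto
      show ?thesis using prom_off[OF L b_in off] lb1 lm1 by simp
    qed
  qed
qed

lemma le_12:
  assumes L: "lab L" and le: "is_linear_extension P R L"
  shows "L m = 1 \<and> L b = 2"
proof -
  have i1: "inv_into P L 1 \<in> P" "L (inv_into P L 1) = 1" using lab_inv[OF L, of 1] n1 by auto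
  have lm: "L m = 1"
  proof (rule ccontr)
    assume "L m \<noteq> 1"
    hence "inv_into P L 1 \<noteq> m" using i1 by auto
    hence "pless R m (inv_into P L 1)" using m_below i1 by blast
    hence "L m < 1" using le m_in i1 unfolding is_linear_extension_def by metis
    thus False using lab_range[OF L m_in] by simp
  qed
  have i2: "inv_into P L 2 \<in> P" "L (inv_into P L 2) = 2" using lab_inv[OF L, of 2] n2 by auto
  have lb: "L b = 2"
  proof (rule ccontr)
    assume "L b \<noteq> 2"
    hence "inv_into P L 2 \<noteq> b" "inv_into P L 2 \<noteq> m" using i2 lm by auto
    hence "pless R b (inv_into P L 2)" using b_pl_other i2 by blast
    hence "L b < 2" using le b_in i2 unfolding is_linear_extension_def by metis
    moreover have "L b \<noteq> 1" using lab_ne[OF L m_in b_in mb] lm by simp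
    ultimately show False using lab_range[OF L b_in] by simp
  qed
  show ?thesis using lm lb by simp
qed

lemma sa3_le:
  assumes L: "lab L" and lm: "L m = 1" and lb: "L b = 2" and s: "sa 3 L"
  shows "is_linear_extension P R L"
  unfolding is_linear_extension_def
proof (intro ballI impI)
  fix x y assume xy: "x \<in> P" "y \<in> P" "pless R x y"
  have ym: "y \<noteq> m" using xy m_below pl_asym by metis
  have lyn1: "L y \<noteq> 1" using lab_ne[OF L xy(2) m_in ym] lm by simp
  show "L x < L y"
  proof (cases "x = m")
    case True then show ?thesis using lm lyn1 lab_range[OF L xy(2)] by simp
  next
    case xm: False
    have yb: "y \<noteq> b"
    proof
      assume "y = b"
      thus False
      proof (cases "x = b")
        case True then show False using xy \<open>y = b\<close> pl_irrefl by metis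
      next
        case False
        hence "pless R b x" using b_pl_other xy(1) xm by blast
        then show False using xy \<open>y = b\<close> pl_asym by metis
      qed
    qed
    have lyn2: "L y \<noteq> 2" using lab_ne[OF L xy(2) b_in yb] lb by simp
    show ?thesis
    proof (cases "x = b")
      case True then show ?thesis using lb lyn1 lyn2 lab_range[OF L xy(2)] by simp
    next
      case xb: False
      have "L x \<noteq> 1" "L x \<noteq> 2" using lab_ne[OF L xy(1) m_in xm] lab_ne[OF L xy(1) b_in xb] lm lb by auto
      show ?thesis
      proof (cases "L x = 3")
        case True
        have "L y \<noteq> 3" using True lab_ne[OF L xy(2) xy(1)] xy pl_irrefl by metis
        then show ?thesis using True lyn1 lyn2 lab_range[OF L xy(2)] by simp
      next
        case False
        hence "3 < L x" using \<open>L x \<noteq> 1\<close> \<open>L x \<noteq> 2\<close> lab_range[OF L xy(1)] by simp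
        then show ?thesis using s xy unfolding sa_def by blast
      qed
    qed
  qed
qed

lemma state: "lab L \<Longrightarrow> (((promotion P R ^^ k) L) m, ((promotion P R ^^ k) L) b) = (stp ^^ k) (L m, L b)"
proof (induction k)
  case 0 then show ?case by simp
next
  case (Suc k)
  define M where "M = (promotion P R ^^ k) L"
  have l: "lab M" using iter[OF Suc.prems n1] M_def by blast
  obtain a c where ac: "(stp ^^ k) (L m, L b) = (a, c)" by (cases "(stp ^^ k) (L m, L b)") auto
  have mc: "M m = a" "M b = c" using Suc.IH[OF Suc.prems] ac M_def by auto
  have "(promotion P R ^^ Suc k) L = promotion P R M" using M_def by simp
  moreover have "(stp ^^ Suc k) (L m, L b) = stp (a, c)" using ac by simp
  moreover have "(promotion P R M m, promotion P R M b) = stp (a, c)"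
    unfolding prom_m[OF l] prom_b[OF l] mc stp_def by simp
  ultimately show ?case by simp
qed

lemma stp_fix: "(stp ^^ j) (1, 2) = (1, 2)"
  by (induction j) (auto simp: stp_def)

lemma quasi_iff:
  assumes L: "lab L"
  shows "quasi_tangled P R L \<longleftrightarrow>
    ((stp ^^ (card P - 2)) (L m, L b) = (1, 2) \<and> (\<forall>k < card P - 2. (stp ^^ k) (L m, L b) \<noteq> (1, 2)))"
proof -
  let ?Lk = "\<lambda>k. (promotion P R ^^ k) L"
  let ?s = "\<lambda>k. (stp ^^ k) (L m, L b)"
  have labk: "lab (?Lk k)" for k using iter[OF L n1] by blast
  have sak: "sa (card P - k) (?Lk k)" for k using iter[OF L n1] by blast
  have le_s: "is_linear_extension P R (?Lk k) \<Longrightarrow> ?s k = (1, 2)" for k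
    using le_12[OF labk] state[OF L, of k] by simp
  have s_le: "?s k = (1, 2) \<Longrightarrow> card P - k \<le> 3 \<Longrightarrow> is_linear_extension P R (?Lk k)" for k
  proof -
    assume a: "?s k = (1, 2)" "card P - k \<le> 3"
    have "?Lk k m = 1" "?Lk k b = 2" using a(1) state[OF L, of k] by auto
    moreover have "sa 3 (?Lk k)" using sak[of k] sa_mono a(2) by blast
    ultimately show ?thesis using sa3_le[OF labk] by blast
  qed
  have s_mono: "?s k = (1, 2) \<Longrightarrow> k \<le> k' \<Longrightarrow> ?s k' = (1, 2)" for k k'
  proof -
    assume a: "?s k = (1, 2)" "k \<le> k'"
    have "?s k' = (stp ^^ (k' - k)) (?s k)" using a(2) funpow_add[of "k' - k" k stp]
      by (simp add: comp_def)
    thus ?thesis using a(1) stp_fix by simp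
  qed
  show ?thesis
  proof
    assume q: "quasi_tangled P R L"
    have "?s (card P - 2) = (1, 2)" using q le_s unfolding quasi_tangled_def by blast
    moreover have "\<forall>k < card P - 2. ?s k \<noteq> (1, 2)"
    proof (intro allI impI notI)
      fix k assume k: "k < card P - 2" "?s k = (1, 2)"
      have "?s (card P - 3) = (1, 2)" using s_mono[OF k(2)] k(1) by simp
      hence "is_linear_extension P R (?Lk (card P - 3))" using s_le k(1) by simp
      moreover have "card P - 3 < card P - 2" using k(1) by simp
      ultimately show False using q unfolding quasi_tangled_def by blast
    qed
    ultimately show "?s (card P - 2) = (1, 2) \<and> (\<forall>k < card P - 2. ?s k \<noteq> (1, 2))" by blast
  next
    assume a: "?s (card P - 2) = (1, 2) \<and> (\<forall>k < card P - 2. ?s k \<noteq> (1, 2))"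
    have "is_linear_extension P R (?Lk (card P - 2))" using s_le a n2 by simp
    moreover have "\<forall>k < card P - 2. \<not> is_linear_extension P R (?Lk k)" using a le_s by blast
    ultimately show "quasi_tangled P R L" unfolding quasi_tangled_def by blast
  qed
qed

lemma quasi_iff2:
  assumes L: "lab L"
  shows "quasi_tangled P R L \<longleftrightarrow> (L b = card P \<or> L m = card P - 1)"
  using quasi_iff[OF L] stp_qs[of "L m" "card P" "L b"] lab_range[OF L m_in] lab_range[OF L b_in]
    lab_ne[OF L m_in b_in mb] n2 by simp

end

lemma exists_min_below:
  assumes fin: "finite P" and po: "partial_order_on P R" and x: "x \<in> P"
  shows "\<exists>z. is_minimal P R z \<and> (z, x) \<in> R"
proof -
  have Rsub: "R \<subseteq> P \<times> P" using partial_order_onD(4)[OF po] .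
  have "finite R" using finite_subset[OF Rsub] fin by blast
  hence wf: "wf (R - Id)" by (rule partial_order_on_well_order_on[OF _ po])
  let ?D = "{y \<in> P. (y, x) \<in> R}"
  have "x \<in> ?D" using x partial_order_onD(1)[OF po] unfolding refl_on_def by auto
  then obtain z where z: "z \<in> ?D" and zmin: "\<And>y. (y, z) \<in> R - Id \<Longrightarrow> y \<notin> ?D"
  proof (rule wfE_min[OF wf])
    fix z assume "z \<in> ?D" "\<And>y. (y, z) \<in> R - Id \<Longrightarrow> y \<notin> ?D"
    then show thesis by (rule that)
  qed
  have "is_minimal P R z"
    unfolding is_minimal_def
  proof (intro conjI notI)
    show "z \<in> P" using z by auto
  next
    assume "\<exists>y\<in>P. pless R y z"
    then obtain y where y: "y \<in> P" "pless R y z" by blast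
    have yz: "(y, z) \<in> R" using y(2) unfolding pless_def by simp
    have zx: "(z, x) \<in> R" using z by simp
    have "(y, x) \<in> R" by (rule transD[OF partial_order_onD(2)[OF po] yz zx])
    hence "y \<in> ?D" using y by auto
    moreover have "(y, z) \<in> R - Id" using y unfolding pless_def by auto
    ultimately show False using zmin by blast
  qed
  thus ?thesis using z by auto
qed

theorem mainTheorem8:
  fixes P :: "'a set" and R :: "('a \<times> 'a) set" and n :: nat
  assumes "finite P" and "partial_order_on P R" and "card P = n"
    and "\<exists>!x. is_minimal P R x"
    and "\<forall>x. is_minimal P R x \<longrightarrow> card {y. covers P R x y} = 1"
  shows "card {L \<in> labelings P. quasi_tangled P R L} = 2 * fact (n - 1) - fact (n - 2)"
proof -
  note fin = assms(1) and po = assms(2)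
  have trans: "trans R" and refl: "refl_on P R" and anti: "antisym R" and Rsub: "R \<subseteq> P \<times> P"
    using partial_order_onD[OF po] by auto
  obtain m where mmin: "is_minimal P R m" and muniq: "\<And>y. is_minimal P R y \<Longrightarrow> y = m"
    using assms(4) by blast
  have m_in: "m \<in> P" using mmin unfolding is_minimal_def by auto
  have m_le: "(m, x) \<in> R" if "x \<in> P" for x
    using exists_min_below[OF fin po that] muniq by blast
  have m_below: "\<forall>x\<in>P. x \<noteq> m \<longrightarrow> pless R m x"
    using m_le unfolding pless_def by auto
  have "card {y. covers P R m y} = 1" using assms(5) mmin by blast
  then obtain b where bset: "{y. covers P R m y} = {b}" using card_1_singletonE by blast
  have cb: "covers P R m b" using bset by auto
  have b_in: "b \<in> P" and mb: "m \<noteq> b" using cb unfolding covers_def pless_def by auto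
  have b_below: "\<forall>x\<in>P. x \<noteq> m \<and> x \<noteq> b \<longrightarrow> pless R b x"
  proof (intro ballI impI)
    fix x assume x: "x \<in> P" "x \<noteq> m \<and> x \<noteq> b"
    have "finite R" using finite_subset[OF Rsub] fin by blast
    hence wf: "wf (R - Id)" by (rule partial_order_on_well_order_on[OF _ po])
    let ?D = "{y \<in> P. pless R m y \<and> (y, x) \<in> R}"
    have "x \<in> ?D" using x m_below refl unfolding refl_on_def by auto
    then obtain z where z: "z \<in> ?D" and zmin: "\<And>y. (y, z) \<in> R - Id \<Longrightarrow> y \<notin> ?D"
    proof (rule wfE_min[OF wf])
      fix z assume "z \<in> ?D" "\<And>y. (y, z) \<in> R - Id \<Longrightarrow> y \<notin> ?D"
      then show thesis by (rule that)
    qed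
    have "covers P R m z"
      unfolding covers_def
    proof (intro conjI notI)
      show "m \<in> P" "z \<in> P" "pless R m z" using m_in z by auto
    next
      assume "\<exists>w\<in>P. pless R m w \<and> pless R w z"
      then obtain w where w: "w \<in> P" "pless R m w" "pless R w z" by blast
      have wz: "(w, z) \<in> R" using w(3) unfolding pless_def by simp
      have zx: "(z, x) \<in> R" using z by simp
      have "(w, x) \<in> R" by (rule transD[OF trans wz zx])
      hence "w \<in> ?D" using w by auto
      moreover have "(w, z) \<in> R - Id" using w unfolding pless_def by auto
      ultimately show False using zmin by blast
    qed
    hence "z = b" using bset by auto
    thus "pless R b x" using z x unfolding pless_def by auto
  qed
  interpret pos2 P R m b
    by unfold_locales (use fin po m_in b_in mb m_below b_below in auto)
  have nn: "card P = n" using assms(3) .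
  have n2': "2 \<le> n" using n2 nn by simp
  have eqset: "{L \<in> labelings P. quasi_tangled P R L} =
     {f \<in> labs P {1..n}. f b = n} \<union> {f \<in> labs P {1..n}. f m = n - 1}"
    using quasi_iff2 nn unfolding lab_def labelings_def labs_def by auto
  have fl: "finite (labs P {1..n})" using labs_finite fin by blast
  have cA: "card {f \<in> labs P {1..n}. f b = n} = fact (n - 1)"
  proof -
    have "card {f \<in> labs P {1..n}. f b = n} = card (labs (P - {b}) ({1..n} - {n}))"
      using labs_fiber[OF b_in, of n "{1..n}"] n2' by simp
    also have "\<dots> = fact (card (P - {b}))"
      using labs_card[of "P - {b}" "{1..n} - {n}"] fin b_in nn n2' by simp
    finally show ?thesis using b_in nn fin by simp
  qed
  have cB: "card {f \<in> labs P {1..n}. f m = n - 1} = fact (n - 1)"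
  proof -
    have "card {f \<in> labs P {1..n}. f m = n - 1} = card (labs (P - {m}) ({1..n} - {n - 1}))"
      using labs_fiber[OF m_in, of "n - 1" "{1..n}"] n2' by simp
    also have "\<dots> = fact (card (P - {m}))"
      using labs_card[of "P - {m}" "{1..n} - {n - 1}"] fin m_in nn n2' by simp
    finally show ?thesis using m_in nn fin by simp
  qed
  have cAB: "card ({f \<in> labs P {1..n}. f b = n} \<inter> {f \<in> labs P {1..n}. f m = n - 1}) = fact (n - 2)"
  proof -
    have "{f \<in> labs P {1..n}. f b = n} \<inter> {f \<in> labs P {1..n}. f m = n - 1} =
          {f \<in> labs P {1..n}. f b = n \<and> f m = n - 1}" by auto
    hence "card ({f \<in> labs P {1..n}. f b = n} \<inter> {f \<in> labs P {1..n}. f m = n - 1}) =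
       card {g \<in> labs (P - {b}) ({1..n} - {n}). (g(b := n)) m = n - 1}"
      using labs_fiberQ[OF b_in, of n "{1..n}" "\<lambda>f. f m = n - 1"] n2' by simp
    also have "\<dots> = card {g \<in> labs (P - {b}) ({1..n} - {n}). g m = n - 1}" using mb by simp
    also have "\<dots> = card (labs (P - {b} - {m}) ({1..n} - {n} - {n - 1}))"
    proof -
      have "n - 1 \<in> {1..n} - {n}" using n2' by auto
      moreover have "m \<in> P - {b}" using m_in mb by auto
      ultimately show ?thesis using labs_fiber[of m "P - {b}" "n - 1" "{1..n} - {n}"] by simp
    qed
    also have "\<dots> = fact (card (P - {b} - {m}))"
    proof (rule labs_card)
      show "finite (P - {b} - {m})" "finite ({1..n} - {n} - {n - 1})" using fin by auto
      have "{1..n} - {n} - {n - 1} = {1..n - 2}" using n2' by auto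
      hence "card ({1..n} - {n} - {n - 1}) = n - 2" by simp
      moreover have "card (P - {b} - {m}) = n - 2"
        using fin m_in b_in mb nn by (simp add: card_Diff_singleton)
      ultimately show "card (P - {b} - {m}) = card ({1..n} - {n} - {n - 1})" by simp
    qed
    also have "\<dots> = fact (n - 2)" using fin m_in b_in mb nn by (simp add: card_Diff_singleton numeral_2_eq_2)
    finally show ?thesis .
  qed
  have "card ({f \<in> labs P {1..n}. f b = n} \<union> {f \<in> labs P {1..n}. f m = n - 1}) =
      card {f \<in> labs P {1..n}. f b = n} + card {f \<in> labs P {1..n}. f m = n - 1}
      - card ({f \<in> labs P {1..n}. f b = n} \<inter> {f \<in> labs P {1..n}. f m = n - 1})"
    using card_Un_Int[of "{f \<in> labs P {1..n}. f b = n}" "{f \<in> labs P {1..n}. f m = n - 1}"] fl by simp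
  thus ?thesis unfolding eqset cA cB cAB by (simp add: mult_2)
qed

end
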